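(* Let $k\ge 2$ and let $a_1,\dots,a_k$ be simple closed curves on an oriented surface such that $a_i$ and $a_{i+1}$ meet transversely in exactly one point and $a_i\cap a_j=\emptyset$ for $|i-j|\ge 2$. Write $a_i$ for the right-handed Dehn twist $t_{a_i}$, and put $b_i=t_{a_{i+1}}(a_i)$, $\bar b_i=t_{a_{i+1}}^{-1}(a_i)$ (curves, also standing for their Dehn twists). Then (a) $(a_{k-1}a_{k-2}\cdots a_2a_1)\cdot(a_ka_{k-1}\cdots a_2a_1)\sim a_k^{\,k}\cdot \bar b_{k-1}\cdots\bar b_2\bar b_1$; (b) $(a_1a_2\cdots a_{k-1}a_k)\cdot(a_1a_2\cdots a_{k-2}a_{k-1})\sim b_1b_2\cdots b_{k-1}\cdot a_k^{\,k}$.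
   Context: For a curve $x$ and mapping class $f$, $t_{f(x)}=f t_x f^{-1}$. Two words (finite sequences) of right-handed Dehn twists are related by $\sim$ if one is obtained from the other by a finite sequence of elementary transformations (Hurwitz moves): $\cdots t_{v}t_{w}\cdots \sim \cdots t_{t_v(w)}t_v\cdots$ and $\cdots t_vt_w\cdots\sim\cdots t_w t_{t_w^{-1}(v)}\cdots$. In particular equivalent words represent the same mapping class. *)

theory Defs
  imports "HOL-Algebra.Group"
begin

text \<open>The mapping class group is a group G acting (by act) on the
set of isotopy classes of simple closed curves (type 'c); tw c is the right-handed
Dehn twist about c. A word of Dehn twists is represented by the list of its curves.\<close>

definition mcg_action :: "('g, 'm) monoid_scheme \<Rightarrow> ('g \<Rightarrow> 'c \<Rightarrow> 'c) \<Rightarrow> ('c \<Rightarrow> 'g) \<Rightarrow> bool" where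
  "mcg_action G act tw \<longleftrightarrow> group G
     \<and> (\<forall>c. act \<one>\<^bsub>G\<^esub> c = c)
     \<and> (\<forall>f\<in>carrier G. \<forall>g\<in>carrier G. \<forall>c. act (f \<otimes>\<^bsub>G\<^esub> g) c = act f (act g c))
     \<and> (\<forall>c. tw c \<in> carrier G)
     \<and> (\<forall>f\<in>carrier G. \<forall>c. tw (act f c) = f \<otimes>\<^bsub>G\<^esub> tw c \<otimes>\<^bsub>G\<^esub> inv\<^bsub>G\<^esub> f)"

definition hurwitz_step :: "('g, 'm) monoid_scheme \<Rightarrow> ('g \<Rightarrow> 'c \<Rightarrow> 'c) \<Rightarrow> ('c \<Rightarrow> 'g)
    \<Rightarrow> 'c list \<Rightarrow> 'c list \<Rightarrow> bool" where
  "hurwitz_step G act tw u u' \<longleftrightarrow> (\<exists>xs ys v w. u = xs @ [v, w] @ ys \<and>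
      (u' = xs @ [act (tw v) w, v] @ ys \<or> u' = xs @ [w, act (inv\<^bsub>G\<^esub> (tw w)) v] @ ys))"

definition hurwitz_equiv :: "('g, 'm) monoid_scheme \<Rightarrow> ('g \<Rightarrow> 'c \<Rightarrow> 'c) \<Rightarrow> ('c \<Rightarrow> 'g)
    \<Rightarrow> 'c list \<Rightarrow> 'c list \<Rightarrow> bool" where
  "hurwitz_equiv G act tw = (\<lambda>u u'. hurwitz_step G act tw u u' \<or> hurwitz_step G act tw u' u)\<^sup>*\<^sup>*"

end

theory Submission
  imports Defs
begin

lemma step_app: "hurwitz_step G act tw u u' \<Longrightarrow> hurwitz_step G act tw (xs@u@ys) (xs@u'@ys)"
  unfolding hurwitz_step_def
  apply (elim exE conjE)
  subgoal for xs' ys' v w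
    apply (rule exI[of _ "xs@xs'"], rule exI[of _ "ys'@ys"], rule exI[of _ v], rule exI[of _ w])
    by auto
  done

lemma heq_app: "hurwitz_equiv G act tw u u' \<Longrightarrow> hurwitz_equiv G act tw (xs@u@ys) (xs@u'@ys)"
  unfolding hurwitz_equiv_def
proof (induction rule: rtranclp_induct)
  case base then show ?case by simp
next
  case (step y z)
  then show ?case
    by (smt (verit, best) rtranclp.rtrancl_into_rtrancl step_app)
qed

lemma heq_refl: "hurwitz_equiv G act tw u u"
  unfolding hurwitz_equiv_def by simp

lemma heq_trans[trans]: "hurwitz_equiv G act tw u v \<Longrightarrow> hurwitz_equiv G act tw v w \<Longrightarrow> hurwitz_equiv G act tw u w"
  unfolding hurwitz_equiv_def by (rule rtranclp_trans)

lemma heq_trans': "hurwitz_equiv G act tw u v \<Longrightarrow> hurwitz_equiv G act tw v' w \<Longrightarrow> v = v' \<Longrightarrow> hurwitz_equiv G act tw u w"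
  using heq_trans by metis

lemma heq_sym: "hurwitz_equiv G act tw u v \<Longrightarrow> hurwitz_equiv G act tw v u"
  unfolding hurwitz_equiv_def
proof (induction rule: rtranclp_induct)
  case base then show ?case by simp
next
  case (step y z)
  then show ?case
    by (metis (no_types, lifting) converse_rtranclp_into_rtranclp)
qed

lemma move1: "hurwitz_equiv G act tw [v,w] [act (tw v) w, v]"
  unfolding hurwitz_equiv_def hurwitz_step_def
  by (rule r_into_rtranclp) (rule disjI1, rule exI[of _ "[]"], rule exI[of _ "[]"], auto)

lemma move2: "hurwitz_equiv G act tw [v,w] [w, act (inv\<^bsub>G\<^esub> (tw w)) v]"
  unfolding hurwitz_equiv_def hurwitz_step_def
  by (rule r_into_rtranclp) (rule disjI1, rule exI[of _ "[]"], rule exI[of _ "[]"], auto)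

lemma braid:
  assumes mcg: "mcg_action G act tw" and h: "act (tw x \<otimes>\<^bsub>G\<^esub> tw y) x = y"
  shows "hurwitz_equiv G act tw [x,y,x] [y,x,y]"
proof -
  have c: "act (tw x) (act (tw y) x) = y"
    using mcg h unfolding mcg_action_def by metis
  have h1: "hurwitz_equiv G act tw [x,y,x] [x, act (tw y) x, y]"
    using heq_app[OF move1[where v=y and w=x], where xs="[x]" and ys="[]"] by simp
  have h2: "hurwitz_equiv G act tw [x, act (tw y) x, y] [act (tw x) (act (tw y) x), x, y]"
    using heq_app[OF move1[where v=x and w="act (tw y) x"], where xs="[]" and ys="[y]"] by simp
  show ?thesis using heq_trans'[OF h1 h2] c by simp
qed

lemma Llem:
  assumes mcg: "mcg_action G act tw" and h: "act (tw x \<otimes>\<^bsub>G\<^esub> tw y) x = y"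
  shows "hurwitz_equiv G act tw ([x,y] @ replicate m x) (replicate (Suc m) y @ [act (inv\<^bsub>G\<^esub> (tw y)) x])"
proof (induction m)
  case 0 then show ?case using move2 by simp
next
  case (Suc m)
  have h1: "hurwitz_equiv G act tw ([x,y,x] @ replicate m x) ([y,x,y] @ replicate m x)"
    using heq_app[OF braid[OF mcg h], where xs="[]" and ys="replicate m x"] by simp
  have h2: "hurwitz_equiv G act tw ([y] @ ([x,y] @ replicate m x)) ([y] @ (replicate (Suc m) y @ [act (inv\<^bsub>G\<^esub> (tw y)) x]))"
    using heq_app[OF Suc, where xs="[y]" and ys="[]"] by simp
  show ?case using heq_trans'[OF h1 h2] by simp
qed

lemma Rlem:
  assumes mcg: "mcg_action G act tw" and h: "act (tw x \<otimes>\<^bsub>G\<^esub> tw y) x = y"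
  shows "hurwitz_equiv G act tw (replicate m x @ [y,x]) ([act (tw y) x] @ replicate (Suc m) y)"
proof (induction m)
  case 0 then show ?case using move1 by simp
next
  case (Suc m)
  have h1: "hurwitz_equiv G act tw (replicate m x @ [x,y,x]) (replicate m x @ [y,x,y])"
    using heq_app[OF braid[OF mcg h], where xs="replicate m x" and ys="[]"] by simp
  have h2: "hurwitz_equiv G act tw ((replicate m x @ [y,x]) @ [y]) (([act (tw y) x] @ replicate (Suc m) y) @ [y])"
    using heq_app[OF Suc, where xs="[]" and ys="[y]"] by simp
  show ?case using heq_trans'[OF h1 h2] by (simp add: replicate_append_same replicate_app_Cons_same)
qed

lemma comm:
  "\<forall>c\<in>set xs. act (tw z) c = c \<Longrightarrow> hurwitz_equiv G act tw ([z] @ xs) (xs @ [z])"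
proof (induction xs)
  case Nil then show ?case by (simp add: heq_refl)
next
  case (Cons c xs)
  have h1: "hurwitz_equiv G act tw ([z,c]@xs) ([act (tw z) c, z]@xs)"
    using heq_app[OF move1[where v=z and w=c], where xs="[]" and ys="xs"] by simp
  have h2: "hurwitz_equiv G act tw ([c]@([z]@xs)) ([c]@(xs@[z]))"
    using heq_app[OF Cons.IH, where xs="[c]" and ys="[]"] Cons.prems by simp
  show ?case using heq_trans'[OF h1 h2] Cons.prems by simp
qed

lemma partA:
  assumes mcg: "mcg_action G act tw"
  shows "(\<forall>i. 1 \<le> i \<longrightarrow> i < k \<longrightarrow> act (tw (a i) \<otimes>\<^bsub>G\<^esub> tw (a (Suc i))) (a i) = a (Suc i))
    \<longrightarrow> (\<forall>i j. 1 \<le> i \<longrightarrow> i \<le> k \<longrightarrow> 1 \<le> j \<longrightarrow> j \<le> k \<longrightarrow> i + 2 \<le> j \<or> j + 2 \<le> i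
           \<longrightarrow> act (tw (a i)) (a j) = a j)
    \<longrightarrow> hurwitz_equiv G act tw
           (map a (rev [1..<k]) @ map a (rev [1..<Suc k]))
           (replicate k (a k) @ map (\<lambda>i. act (inv\<^bsub>G\<^esub> (tw (a (Suc i)))) (a i)) (rev [1..<k]))"
proof (induction k)
  case 0 then show ?case by (simp add: heq_refl)
next
  case (Suc k)
  show ?case
  proof (intro impI)
    assume b: "\<forall>i. 1 \<le> i \<longrightarrow> i < Suc k \<longrightarrow> act (tw (a i) \<otimes>\<^bsub>G\<^esub> tw (a (Suc i))) (a i) = a (Suc i)"
      and d: "\<forall>i j. 1 \<le> i \<longrightarrow> i \<le> Suc k \<longrightarrow> 1 \<le> j \<longrightarrow> j \<le> Suc k \<longrightarrow> i + 2 \<le> j \<or> j + 2 \<le> i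
           \<longrightarrow> act (tw (a i)) (a j) = a j"
    show "hurwitz_equiv G act tw
           (map a (rev [1..<Suc k]) @ map a (rev [1..<Suc (Suc k)]))
           (replicate (Suc k) (a (Suc k)) @ map (\<lambda>i. act (inv\<^bsub>G\<^esub> (tw (a (Suc i)))) (a i)) (rev [1..<Suc k]))"
    proof (cases "k = 0")
      case True then show ?thesis by (simp add: heq_refl)
    next
      case False
      define P where "P = map a (rev [1..<k])"
      define bb where "bb = (\<lambda>i. act (inv\<^bsub>G\<^esub> (tw (a (Suc i)))) (a i))"
      have IH: "hurwitz_equiv G act tw (P @ (a k # P)) (replicate k (a k) @ map bb (rev [1..<k]))"
        using Suc.IH b d False unfolding P_def bb_def by (simp add: upt_Suc_append) 
      have e1: "map a (rev [1..<Suc k]) = a k # P" using False by (simp add: P_def)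
      have e2: "map a (rev [1..<Suc (Suc k)]) = a (Suc k) # a k # P" using False by (simp add: P_def)
      have e3: "map bb (rev [1..<Suc k]) = bb k # map bb (rev [1..<k])" using False by simp
      have cm: "\<forall>c\<in>set P. act (tw (a (Suc k))) c = c"
        unfolding P_def using d by auto
      have h1: "hurwitz_equiv G act tw ([a k] @ (P @ [a (Suc k)]) @ (a k # P)) ([a k] @ ([a (Suc k)] @ P) @ (a k # P))"
        using heq_app[OF heq_sym[OF comm[where act=act and tw=tw and z="a (Suc k)" and G=G, OF cm]], where xs="[a k]" and ys="a k # P"] by simp
      have h2: "hurwitz_equiv G act tw ([a k, a (Suc k)] @ (P @ (a k # P)) @ []) ([a k, a (Suc k)] @ (replicate k (a k) @ map bb (rev [1..<k])) @ [])"
        using heq_app[OF IH] by blast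
      have br: "act (tw (a k) \<otimes>\<^bsub>G\<^esub> tw (a (Suc k))) (a k) = a (Suc k)" using b False by simp
      have h3: "hurwitz_equiv G act tw ([] @ ([a k, a (Suc k)] @ replicate k (a k)) @ map bb (rev [1..<k]))
         ([] @ (replicate (Suc k) (a (Suc k)) @ [bb k]) @ map bb (rev [1..<k]))"
        using heq_app[OF Llem[OF mcg br]] unfolding bb_def by blast
      have "hurwitz_equiv G act tw ([a k] @ (P @ [a (Suc k)]) @ (a k # P)) ([] @ (replicate (Suc k) (a (Suc k)) @ [bb k]) @ map bb (rev [1..<k]))"
        using heq_trans'[OF heq_trans'[OF h1 h2] h3] by simp
      then show ?thesis using e1 e2 e3 unfolding bb_def by simp
    qed
  qed
qed

lemma partB:
  assumes mcg: "mcg_action G act tw"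
  shows "(\<forall>i. 1 \<le> i \<longrightarrow> i < k \<longrightarrow> act (tw (a i) \<otimes>\<^bsub>G\<^esub> tw (a (Suc i))) (a i) = a (Suc i))
    \<longrightarrow> (\<forall>i j. 1 \<le> i \<longrightarrow> i \<le> k \<longrightarrow> 1 \<le> j \<longrightarrow> j \<le> k \<longrightarrow> i + 2 \<le> j \<or> j + 2 \<le> i
           \<longrightarrow> act (tw (a i)) (a j) = a j)
    \<longrightarrow> hurwitz_equiv G act tw
           (map a [1..<Suc k] @ map a [1..<k])
           (map (\<lambda>i. act (tw (a (Suc i))) (a i)) [1..<k] @ replicate k (a k))"
proof (induction k)
  case 0 then show ?case by (simp add: heq_refl)
next
  case (Suc k)
  show ?case
  proof (intro impI)
    assume b: "\<forall>i. 1 \<le> i \<longrightarrow> i < Suc k \<longrightarrow> act (tw (a i) \<otimes>\<^bsub>G\<^esub> tw (a (Suc i))) (a i) = a (Suc i)"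
      and d: "\<forall>i j. 1 \<le> i \<longrightarrow> i \<le> Suc k \<longrightarrow> 1 \<le> j \<longrightarrow> j \<le> Suc k \<longrightarrow> i + 2 \<le> j \<or> j + 2 \<le> i
           \<longrightarrow> act (tw (a i)) (a j) = a j"
    show "hurwitz_equiv G act tw
           (map a [1..<Suc (Suc k)] @ map a [1..<Suc k])
           (map (\<lambda>i. act (tw (a (Suc i))) (a i)) [1..<Suc k] @ replicate (Suc k) (a (Suc k)))"
    proof (cases "k = 0")
      case True then show ?thesis by (simp add: heq_refl)
    next
      case False
      define Q where "Q = map a [1..<k]"
      define bb where "bb = (\<lambda>i. act (tw (a (Suc i))) (a i))"
      have IH: "hurwitz_equiv G act tw ((Q @ [a k]) @ Q) (map bb [1..<k] @ replicate k (a k))"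
        using Suc.IH b d False unfolding Q_def bb_def by simp
      have e1: "map a [1..<Suc k] = Q @ [a k]" using False by (simp add: Q_def)
      have e2: "map a [1..<Suc (Suc k)] = Q @ [a k, a (Suc k)]" using False by (simp add: Q_def)
      have e3: "map bb [1..<Suc k] = map bb [1..<k] @ [bb k]" using False by simp
      have cm: "\<forall>c\<in>set Q. act (tw (a (Suc k))) c = c"
        unfolding Q_def using d by auto
      have h1: "hurwitz_equiv G act tw ((Q @ [a k]) @ ([a (Suc k)] @ Q) @ [a k]) ((Q @ [a k]) @ (Q @ [a (Suc k)]) @ [a k])"
        using heq_app[OF comm[where act=act and tw=tw and z="a (Suc k)" and G=G, OF cm]] by blast
      have h2: "hurwitz_equiv G act tw ([] @ ((Q @ [a k]) @ Q) @ [a (Suc k), a k]) ([] @ (map bb [1..<k] @ replicate k (a k)) @ [a (Suc k), a k])"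
        using heq_app[OF IH] by blast
      have br: "act (tw (a k) \<otimes>\<^bsub>G\<^esub> tw (a (Suc k))) (a k) = a (Suc k)" using b False by simp
      have h3: "hurwitz_equiv G act tw (map bb [1..<k] @ (replicate k (a k) @ [a (Suc k), a k]) @ [])
         (map bb [1..<k] @ ([bb k] @ replicate (Suc k) (a (Suc k))) @ [])"
        using heq_app[OF Rlem[OF mcg br]] unfolding bb_def by blast
      have "hurwitz_equiv G act tw ((Q @ [a k]) @ ([a (Suc k)] @ Q) @ [a k]) (map bb [1..<k] @ ([bb k] @ replicate (Suc k) (a (Suc k))) @ [])"
        using heq_trans'[OF heq_trans'[OF h1 h2] h3] by simp
      then show ?thesis using e1 e2 e3 unfolding bb_def by simp
    qed
  qed
qed

theorem lemma3p3:
  fixes G :: "('g, 'm) monoid_scheme" and act :: "'g \<Rightarrow> 'c \<Rightarrow> 'c" and tw :: "'c \<Rightarrow> 'g"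
    and a :: "nat \<Rightarrow> 'c" and k :: nat
  assumes "mcg_action G act tw"
    and "k \<ge> 2"
    \<comment> \<open>a_i, a_{i+1} meet transversely once: t_{a_i} t_{a_{i+1}} (a_i) = a_{i+1} and vice versa\<close>
    and "\<And>i. 1 \<le> i \<Longrightarrow> i < k \<Longrightarrow> act (tw (a i) \<otimes>\<^bsub>G\<^esub> tw (a (Suc i))) (a i) = a (Suc i)"
    and "\<And>i. 1 \<le> i \<Longrightarrow> i < k \<Longrightarrow> act (tw (a (Suc i)) \<otimes>\<^bsub>G\<^esub> tw (a i)) (a (Suc i)) = a i"
    \<comment> \<open>disjoint curves: the twist about one fixes the other\<close>
    and "\<And>i j. 1 \<le> i \<Longrightarrow> i \<le> k \<Longrightarrow> 1 \<le> j \<Longrightarrow> j \<le> k \<Longrightarrow> i + 2 \<le> j \<or> j + 2 \<le> i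
           \<Longrightarrow> act (tw (a i)) (a j) = a j"
  shows "hurwitz_equiv G act tw
           (map a (rev [1..<k]) @ map a (rev [1..<Suc k]))
           (replicate k (a k) @ map (\<lambda>i. act (inv\<^bsub>G\<^esub> (tw (a (Suc i)))) (a i)) (rev [1..<k]))
       \<and> hurwitz_equiv G act tw
           (map a [1..<Suc k] @ map a [1..<k])
           (map (\<lambda>i. act (tw (a (Suc i))) (a i)) [1..<k] @ replicate k (a k))"
  using partA[OF assms(1), of k a] partB[OF assms(1), of k a] assms(3,5) by blast

end
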